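(* Let $E$ be a finite set and let $P$ be a nonempty partition of the set $\cup P$, where $\cup P\subseteq E$. Let $M_E(P)$ be the unique partition matroid determined by $P$. Then $F(M_E(P))=P$.
   Context: For a set family $S$, $\cup S=\bigcup_{X\in S}X$. A partition of a set $U$ is a family of nonempty, pairwise disjoint subsets of $U$ with union $U$. The unique partition matroid $M_E(P)$ is the matroid $(E,\mathcal{I}_P)$ with $\mathcal{I}_P=\{X\subseteq\cup P: |X\cap D|\le 1 \text{ for all } D\in P\}$. For a matroid $M$ with independent sets $\mathcal{I}(M)$, rank function $r$ and rank $r(M)>0$: $s(M)=\{A\in\mathcal{I}(M): |A|=r(M)-1\}$; $K_M(X)=\{a\in E: r(X\cup\{a\})=r(X)+1\}$; and the forming base family is $F(M)=\{K_M(X): X\in s(M)\}$. *)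

theory Defs
  imports Main
begin

type_synonym 'a matroid = "'a set \<times> 'a set set"

definition ground :: "'a matroid \<Rightarrow> 'a set" where "ground M = fst M"
definition indep :: "'a matroid \<Rightarrow> 'a set set" where "indep M = snd M"

definition is_partition :: "'a set set \<Rightarrow> 'a set \<Rightarrow> bool" where
  "is_partition P U \<longleftrightarrow> (\<forall>D\<in>P. D \<noteq> {}) \<and>
     (\<forall>D1\<in>P. \<forall>D2\<in>P. D1 \<noteq> D2 \<longrightarrow> D1 \<inter> D2 = {}) \<and> \<Union>P = U"

definition partition_indep :: "'a set set \<Rightarrow> 'a set set" where
  "partition_indep P = {X. X \<subseteq> \<Union>P \<and> (\<forall>D\<in>P. card (X \<inter> D) \<le> 1)}"

definition partition_matroid :: "'a set \<Rightarrow> 'a set set \<Rightarrow> 'a matroid" where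
  "partition_matroid E P = (E, partition_indep P)"

definition rank :: "'a matroid \<Rightarrow> 'a set \<Rightarrow> nat" where
  "rank M X = Max {card Y | Y. Y \<subseteq> X \<and> Y \<in> indep M}"

definition matroid_rank :: "'a matroid \<Rightarrow> nat" where
  "matroid_rank M = rank M (ground M)"

definition s_fam :: "'a matroid \<Rightarrow> 'a set set" where
  "s_fam M = {A \<in> indep M. card A = matroid_rank M - 1}"

definition K_set :: "'a matroid \<Rightarrow> 'a set \<Rightarrow> 'a set" where
  "K_set M X = {a \<in> ground M. rank M (X \<union> {a}) = rank M X + 1}"

definition forming_base_family :: "'a matroid \<Rightarrow> 'a set set" where
  "forming_base_family M = {K_set M X | X. X \<in> s_fam M}"

end

theory Submission
  imports Defs
begin

definition SS :: "'a set set \<Rightarrow> 'a set \<Rightarrow> 'a set set" where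
  "SS P X = {D\<in>P. X \<inter> D \<noteq> {}}"

lemma blk_unique:
  assumes "is_partition P U" "D\<in>P" "D'\<in>P" "x\<in>D" "x\<in>D'" shows "D = D'"
  using assms unfolding is_partition_def by blast

lemma indep_card_le:
  assumes part: "is_partition P (\<Union>P)" and fP: "finite P"
    and Y: "Y \<in> partition_indep P" and fY: "finite Y"
  shows "card Y \<le> card (SS P Y)"
proof -
  define g where "g y = (SOME D. D\<in>P \<and> y\<in>D)" for y
  have Yu: "Y \<subseteq> \<Union>P" using Y unfolding partition_indep_def by auto
  have c1: "\<And>D. D\<in>P \<Longrightarrow> card (Y \<inter> D) \<le> 1" using Y unfolding partition_indep_def by auto
  have g: "\<And>y. y\<in>Y \<Longrightarrow> g y \<in> P \<and> y \<in> g y"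
  proof -
    fix y assume "y\<in>Y" then obtain D where "D\<in>P" "y\<in>D" using Yu by auto
    then show "g y \<in> P \<and> y \<in> g y" unfolding g_def using someI[where P="\<lambda>D. D\<in>P \<and> y\<in>D" and x=D] by blast
  qed
  have "inj_on g Y"
  proof (rule inj_onI)
    fix y y' assume a: "y\<in>Y" "y'\<in>Y" "g y = g y'"
    then have "{y,y'} \<subseteq> Y \<inter> g y" using g by auto
    moreover have "finite (Y \<inter> g y)" using fY by auto
    ultimately have "card {y,y'} \<le> card (Y \<inter> g y)" by (rule card_mono[rotated])
    also have "\<dots> \<le> 1" using c1[of "g y"] g a(1) by blast
    finally have "card {y,y'} \<le> 1" .
    then show "y = y'" by (cases "y = y'") auto
  qed
  moreover have "g ` Y \<subseteq> SS P Y" using g unfolding SS_def by auto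
  moreover have "finite (SS P Y)" using fP unfolding SS_def by auto
  ultimately show ?thesis using card_inj_on_le by blast
qed

lemma transversal:
  assumes part: "is_partition P (\<Union>P)" and fP: "finite P"
    and T: "T \<subseteq> P" and X: "\<And>D. D\<in>T \<Longrightarrow> X \<inter> D \<noteq> {}"
  shows "\<exists>Y. Y \<subseteq> X \<and> Y \<in> partition_indep P \<and> card Y = card T \<and> SS P Y = T"
proof -
  define f where "f D = (SOME x. x \<in> X \<inter> D)" for D
  have f: "\<And>D. D\<in>T \<Longrightarrow> f D \<in> X \<inter> D" unfolding f_def using X by (metis ex_in_conv someI)
  have inj: "inj_on f T"
  proof (rule inj_onI)
    fix D D' assume "D\<in>T" "D'\<in>T" "f D = f D'"
    then show "D = D'" using f[of D] f[of D'] T blk_unique[OF part, of D D' "f D"] by auto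
  qed
  have ind: "f ` T \<in> partition_indep P"
    unfolding partition_indep_def
  proof (intro CollectI conjI ballI)
    show "f ` T \<subseteq> \<Union>P"
    proof
      fix x assume "x \<in> f ` T"
      then obtain D where "D \<in> T" "x = f D" by auto
      then show "x \<in> \<Union>P" using f[of D] T by auto
    qed
    fix D assume D: "D\<in>P"
    have "f ` T \<inter> D \<subseteq> {f D}"
    proof
      fix x assume "x \<in> f ` T \<inter> D"
      then obtain D' where "D'\<in>T" "x = f D'" "x\<in>D" by auto
      then have "D' = D" using f[of D'] T D blk_unique[OF part, of D' D x] by auto
      then show "x \<in> {f D}" using \<open>x = f D'\<close> by simp
    qed
    then have "card (f ` T \<inter> D) \<le> card {f D}" by (rule card_mono[rotated]) simp
    then show "card (f ` T \<inter> D) \<le> 1" by simp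
  qed
  have ss: "SS P (f ` T) = T"
  proof
    show "SS P (f ` T) \<subseteq> T"
    proof
      fix D assume "D \<in> SS P (f ` T)"
      then obtain D' where "D\<in>P" "D'\<in>T" "f D' \<in> D" unfolding SS_def by auto
      then show "D\<in>T" using f[of D'] T blk_unique[OF part, of D' D "f D'"] by auto
    qed
    show "T \<subseteq> SS P (f ` T)" unfolding SS_def using f T by fastforce
  qed
  show ?thesis
    by (rule exI[of _ "f ` T"]) (use f ind ss card_image[OF inj] in auto)
qed

lemma rank_eq:
  assumes part: "is_partition P (\<Union>P)" and fP: "finite P" and fX: "finite X"
  shows "rank (partition_matroid E P) X = card (SS P X)"
proof -
  let ?C = "{card Y | Y. Y \<subseteq> X \<and> Y \<in> partition_indep P}"
  have fin: "finite ?C"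
  proof -
    have "?C \<subseteq> card ` Pow X" by auto
    then show ?thesis by (rule finite_subset) (simp add: fX)
  qed
  obtain Y where Y: "Y \<subseteq> X" "Y \<in> partition_indep P" "card Y = card (SS P X)"
  proof -
    have a1: "SS P X \<subseteq> P" by (auto simp: SS_def)
    have a2: "\<And>D. D \<in> SS P X \<Longrightarrow> X \<inter> D \<noteq> {}" by (simp add: SS_def)
    show ?thesis using transversal[OF part fP a1 a2] that by blast
  qed
  have "\<forall>c\<in>?C. c \<le> card (SS P X)"
  proof
    fix c assume "c\<in>?C"
    then obtain Z where Z: "Z \<subseteq> X" "Z \<in> partition_indep P" "c = card Z" by auto
    have "c \<le> card (SS P Z)" using indep_card_le[OF part fP Z(2) finite_subset[OF Z(1) fX]] Z(3) by simp
    also have "\<dots> \<le> card (SS P X)"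
      by (rule card_mono) (use fP Z in \<open>auto simp: SS_def\<close>)
    finally show "c \<le> card (SS P X)" .
  qed
  moreover have "card (SS P X) \<in> ?C"
  proof -
    have "card Y \<in> ?C" using Y(1,2) by blast
    then show ?thesis using Y(3) by simp
  qed
  ultimately show ?thesis unfolding rank_def partition_matroid_def indep_def snd_conv
    using fin by (intro Max_eqI) auto
qed

lemma K_eq:
  assumes part: "is_partition P (\<Union>P)" and fP: "finite P" and fE: "finite E"
    and PE: "\<Union>P \<subseteq> E" and A: "A \<subseteq> E"
  shows "K_set (partition_matroid E P) A = \<Union>(P - SS P A)"
proof -
  have fA: "finite A" using A fE finite_subset by blast
  have key: "\<And>a. SS P (A \<union> {a}) = SS P A \<union> {D\<in>P. a\<in>D}" unfolding SS_def by auto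
  have fS: "\<And>X. finite (SS P X)" using fP unfolding SS_def by auto
  show ?thesis
  proof (rule set_eqI)
    fix a
    have r: "rank (partition_matroid E P) (A \<union> {a}) = card (SS P A \<union> {D\<in>P. a\<in>D})"
      "rank (partition_matroid E P) A = card (SS P A)"
      using rank_eq[OF part fP] fA key by auto
    show "a \<in> K_set (partition_matroid E P) A \<longleftrightarrow> a \<in> \<Union>(P - SS P A)"
    proof
      assume "a \<in> K_set (partition_matroid E P) A"
      then have "card (SS P A \<union> {D\<in>P. a\<in>D}) = card (SS P A) + 1"
        using r unfolding K_set_def by auto
      then have "\<not> {D\<in>P. a\<in>D} \<subseteq> SS P A" by (metis Un_absorb2 n_not_Suc_n Suc_eq_plus1)
      then show "a \<in> \<Union>(P - SS P A)" by blast
    next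
      assume "a \<in> \<Union>(P - SS P A)"
      then obtain D where D: "D\<in>P" "D \<notin> SS P A" "a\<in>D" by auto
      have "{D'\<in>P. a\<in>D'} = {D}" using D blk_unique[OF part] by blast
      then have "card (SS P A \<union> {D\<in>P. a\<in>D}) = card (SS P A) + 1"
        using D fS by simp
      moreover have "a \<in> E" using D PE by blast
      ultimately show "a \<in> K_set (partition_matroid E P) A"
        unfolding K_set_def mem_Collect_eq r by (simp add: partition_matroid_def ground_def)
    qed
  qed
qed

theorem theorem6:
  fixes E :: "'a set" and P :: "'a set set"
  assumes "finite E"
    and "\<Union>P \<subseteq> E"
    and "P \<noteq> {}"
    and "is_partition P (\<Union>P)"
  shows "forming_base_family (partition_matroid E P) = P"
proof -
  note part = assms(4)
  have "P \<subseteq> Pow E" using assms(2) by auto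
  then have fP: "finite P" by (rule finite_subset) (simp add: assms(1))
  have ne: "\<And>D. D\<in>P \<Longrightarrow> D \<noteq> {}" using part unfolding is_partition_def by auto
  have SSE: "SS P E = P" unfolding SS_def using ne assms(2) by blast
  have mr: "matroid_rank (partition_matroid E P) = card P"
    unfolding matroid_rank_def using rank_eq[OF part fP assms(1)] SSE
    by (simp add: ground_def partition_matroid_def)
  have n: "card P \<ge> 1" using fP assms(3) by (simp add: Suc_leI card_gt_0_iff)
  have indM: "indep (partition_matroid E P) = partition_indep P"
    by (simp add: indep_def partition_matroid_def)
  show ?thesis
  proof
    show "forming_base_family (partition_matroid E P) \<subseteq> P"
    proof
      fix K assume "K \<in> forming_base_family (partition_matroid E P)"
      then obtain A where A: "A \<in> partition_indep P" "card A = card P - 1"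
        and K: "K = K_set (partition_matroid E P) A"
        unfolding forming_base_family_def s_fam_def mr indM by auto
      have AE: "A \<subseteq> E" using A(1) assms(2) unfolding partition_indep_def by auto
      have fA: "finite A" using AE assms(1) finite_subset by blast
      have c: "card A = card (SS P A)"
      proof -
        have "card A \<le> card (SS P A)" using indep_card_le[OF part fP A(1) fA] .
        moreover have "card (SS P A) \<le> card A"
        proof -
          have "\<forall>B\<in>SS P A. \<exists>x\<in>A. x \<in> B" unfolding SS_def by blast
          then obtain h where h: "\<And>B. B \<in> SS P A \<Longrightarrow> h B \<in> A \<and> h B \<in> B" by metis
          have "inj_on h (SS P A)"
          proof (rule inj_onI)
            fix B B' assume "B \<in> SS P A" "B' \<in> SS P A" "h B = h B'"
            then show "B = B'" using h[of B] h[of B'] blk_unique[OF part, of B B' "h B"] unfolding SS_def by auto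
          qed
          moreover have "h ` SS P A \<subseteq> A" using h by auto
          ultimately show ?thesis using card_inj_on_le fA by blast
        qed
        ultimately show ?thesis by simp
      qed
      have sub: "SS P A \<subseteq> P" unfolding SS_def by auto
      have "card (P - SS P A) = 1" using c A(2) n card_Diff_subset[OF finite_subset[OF sub fP] sub] by simp
      then obtain D0 where D0: "P - SS P A = {D0}" using card_1_singletonE by blast
      then have "K = D0" using K_eq[OF part fP assms(1,2) AE] K by simp
      then show "K \<in> P" using D0 by auto
    qed
  next
    show "P \<subseteq> forming_base_family (partition_matroid E P)"
    proof
      fix D0 assume D0: "D0 \<in> P"
      obtain Y where Y: "Y \<in> partition_indep P" "card Y = card (P - {D0})" "SS P Y = P - {D0}"
        using transversal[OF part fP, of "P - {D0}" "\<Union>P"] ne by blast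
      have YE: "Y \<subseteq> E" using Y(1) assms(2) unfolding partition_indep_def by auto
      have "K_set (partition_matroid E P) Y = D0"
        using K_eq[OF part fP assms(1,2) YE] Y(3) D0 by auto
      moreover have "Y \<in> s_fam (partition_matroid E P)"
        unfolding s_fam_def mr indM using Y(1,2) D0 fP by (simp add: card_Diff_singleton)
      ultimately show "D0 \<in> forming_base_family (partition_matroid E P)"
        unfolding forming_base_family_def by blast
    qed
  qed
qed

end
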